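(* Let $\lambda$ be a singular cardinal which is a limit of strongly compact cardinals. Then every strong system over $\lambda^+$ whose index set has cardinality $<\lambda$ has a branch of size $\lambda^+$ (i.e. a branch meeting unboundedly many levels of the system).
   Context: Systems. Let $\lambda$ be a cardinal. A $\lambda^+$-system $\mathcal S=(T,R)$ consists of: a cardinal $\tau\le\lambda$ (the width), an unbounded set $D\subseteq\lambda^+$ (the domain), levels $T_\alpha\subseteq\tau\times\{\alpha\}$ for $\alpha\in D$, an index set $I$ with $|I|\le\lambda$, and binary relations $R_i$ ($i\in I$), each a subset of $\bigcup\{T_\alpha\times T_\beta\mid \alpha<\beta \text{ in } D\}$, such that: (1) for all $\alpha<\beta$ in $D$ there are $a\in T_\alpha$, $b\in T_\beta$, $i\in I$ with $\langle a,b\rangle\in R_i$; (2) for every $i\in I$ and $\alpha<\beta<\gamma$ in $D$, if $a\in T_\alpha$, $b\in T_\beta$, $c\in T_\gamma$ with $\langle a,c\rangle\in R_i$ and $\langle b,c\rangle\in R_i$, then $\langle a,b\rangle\in R_i$. The system is strong if (1) is strengthened to: for all $\alpha<\beta$ in $D$ and every $b\in T_\beta$ there are $a\in T_\alpha$ and $i\in I$ with $\langle a,b\rangle\in R_i$. A branch of $\mathcal S$ is a set $B$ of nodes such that for some single $i\in I$, for all $a\ne b$ in $B$, $\langle a,b\rangle\in R_i$ or $\langle b,a\rangle\in R_i$. Strongly compact: every $\kappa$-complete filter extends to a $\kappa$-complete ultrafilter. *)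

theory Defs
  imports Main
begin

text \<open>Ordinals are elements of the field of a well-order; cardinals are
  cardinal-order relations (library notions Card_order, card_of, ordLess2,
  ordLeq2, ordIso2, cardSuc, regularCard from Main).\<close>

definition ord_less :: "'k rel \<Rightarrow> 'k \<Rightarrow> 'k \<Rightarrow> bool" where
  "ord_less K a b \<equiv> (a, b) \<in> K \<and> a \<noteq> b"

definition complete_filter :: "'c rel \<Rightarrow> 'u set \<Rightarrow> 'u set set \<Rightarrow> bool" where
  "complete_filter c X F \<equiv>
     F \<subseteq> Pow X \<and> X \<in> F \<and> {} \<notin> F \<and>
     (\<forall>A B. A \<in> F \<and> A \<subseteq> B \<and> B \<subseteq> X \<longrightarrow> B \<in> F) \<and>
     (\<forall>\<A>. \<A> \<subseteq> F \<and> \<A> \<noteq> {} \<and> ordLess2 (card_of \<A>) c \<longrightarrow> \<Inter>\<A> \<in> F)"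

definition complete_ultrafilter :: "'c rel \<Rightarrow> 'u set \<Rightarrow> 'u set set \<Rightarrow> bool" where
  "complete_ultrafilter c X U \<equiv>
     complete_filter c X U \<and> (\<forall>Y. Y \<subseteq> X \<longrightarrow> Y \<in> U \<or> X - Y \<in> U)"

definition strongly_compact :: "'c rel \<Rightarrow> 'u itself \<Rightarrow> bool" where
  "strongly_compact c (_::'u itself) \<equiv>
     Card_order c \<and> ordLess2 natLeq c \<and>
     (\<forall>(X::'u set) F. complete_filter c X F \<longrightarrow>
        (\<exists>U. F \<subseteq> U \<and> complete_ultrafilter c X U))"

text \<open>A lambda^+-system, where r represents lambda and K represents lambda^+
  (a well-order of type lambda^+).  W stands for the width tau (|W| \<le> lambda);
  the level alpha (alpha \<in> D) is T alpha \<times> {alpha}, with T alpha \<subseteq> W; the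
  relations are R i for i \<in> I.\<close>
definition nodes :: "'k set \<Rightarrow> ('k \<Rightarrow> 'w set) \<Rightarrow> ('w \<times> 'k) set" where
  "nodes D T = {(a, \<alpha>). \<alpha> \<in> D \<and> a \<in> T \<alpha>}"

definition lam_system ::
  "'l rel \<Rightarrow> 'k rel \<Rightarrow> 'w set \<Rightarrow> 'k set \<Rightarrow> ('k \<Rightarrow> 'w set) \<Rightarrow> 'i set
     \<Rightarrow> ('i \<Rightarrow> (('w \<times> 'k) \<times> ('w \<times> 'k)) set) \<Rightarrow> bool" where
  "lam_system r K W D T I R \<equiv>
     ordLeq2 (card_of W) r \<and>
     D \<subseteq> Field K \<and> (\<forall>\<alpha>\<in>Field K. \<exists>\<beta>\<in>D. ord_less K \<alpha> \<beta>) \<and>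
     (\<forall>\<alpha>\<in>D. T \<alpha> \<subseteq> W) \<and>
     ordLeq2 (card_of I) r \<and>
     (\<forall>i\<in>I. R i \<subseteq> {((a, \<alpha>), (b, \<beta>)). \<alpha> \<in> D \<and> \<beta> \<in> D \<and> ord_less K \<alpha> \<beta> \<and>
                                          a \<in> T \<alpha> \<and> b \<in> T \<beta>}) \<and>
     (\<forall>\<alpha>\<in>D. \<forall>\<beta>\<in>D. ord_less K \<alpha> \<beta> \<longrightarrow>
        (\<exists>a\<in>T \<alpha>. \<exists>b\<in>T \<beta>. \<exists>i\<in>I. ((a, \<alpha>), (b, \<beta>)) \<in> R i)) \<and>
     (\<forall>i\<in>I. \<forall>\<alpha>\<in>D. \<forall>\<beta>\<in>D. \<forall>\<gamma>\<in>D. ord_less K \<alpha> \<beta> \<and> ord_less K \<beta> \<gamma> \<longrightarrow>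
        (\<forall>a\<in>T \<alpha>. \<forall>b\<in>T \<beta>. \<forall>c\<in>T \<gamma>.
           ((a, \<alpha>), (c, \<gamma>)) \<in> R i \<and> ((b, \<beta>), (c, \<gamma>)) \<in> R i \<longrightarrow>
           ((a, \<alpha>), (b, \<beta>)) \<in> R i))"

definition strong_lam_system ::
  "'l rel \<Rightarrow> 'k rel \<Rightarrow> 'w set \<Rightarrow> 'k set \<Rightarrow> ('k \<Rightarrow> 'w set) \<Rightarrow> 'i set
     \<Rightarrow> ('i \<Rightarrow> (('w \<times> 'k) \<times> ('w \<times> 'k)) set) \<Rightarrow> bool" where
  "strong_lam_system r K W D T I R \<equiv>
     lam_system r K W D T I R \<and>
     (\<forall>\<alpha>\<in>D. \<forall>\<beta>\<in>D. ord_less K \<alpha> \<beta> \<longrightarrow>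
        (\<forall>b\<in>T \<beta>. \<exists>a\<in>T \<alpha>. \<exists>i\<in>I. ((a, \<alpha>), (b, \<beta>)) \<in> R i))"

definition is_branch ::
  "'k set \<Rightarrow> ('k \<Rightarrow> 'w set) \<Rightarrow> 'i set \<Rightarrow> ('i \<Rightarrow> (('w \<times> 'k) \<times> ('w \<times> 'k)) set)
     \<Rightarrow> ('w \<times> 'k) set \<Rightarrow> bool" where
  "is_branch D T I R B \<equiv>
     B \<subseteq> nodes D T \<and>
     (\<exists>i\<in>I. \<forall>x\<in>B. \<forall>y\<in>B. x \<noteq> y \<longrightarrow> (x, y) \<in> R i \<or> (y, x) \<in> R i)"

end

theory Submission
  imports Defs
begin
unbundle cardinal_syntax


lemma small_of_le:
  assumes "Card_order r" "|A| \<le>o |Field r|" shows "|A| \<le>o r"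
  using assms card_of_Field_ordIso ordLeq_ordIso_trans by blast

lemma le_Field_of_small:
  assumes "Card_order r" "|A| \<le>o r" shows "|A| \<le>o |Field r|"
  using assms card_of_Field_ordIso ordLeq_ordIso_trans ordIso_symmetric by blast

lemma small_union:
  assumes r: "Card_order r" "infinite (Field r)" and L: "|L| \<le>o r"
    and P: "\<forall>l\<in>L. |P l| \<le>o r"
  shows "|\<Union>l\<in>L. P l| \<le>o r"
proof -
  have L': "|L| \<le>o |Field r|" by (rule le_Field_of_small[OF r(1) L])
  have P': "\<forall>l\<in>L. |P l| \<le>o |Field r|" using P le_Field_of_small[OF r(1)] by blast
  have "|\<Union>l\<in>L. P l| \<le>o |Field r|"
    by (rule card_of_UNION_ordLeq_infinite[OF r(2) L' P'])
  thus ?thesis using small_of_le r by blast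
qed

lemma large_pigeon:
  assumes r: "Card_order r" "infinite (Field r)" and A: "\<not> |A| \<le>o r"
    and cov: "A \<subseteq> (\<Union>l\<in>L. P l)" and L: "|L| \<le>o r"
  shows "\<exists>l\<in>L. \<not> |A \<inter> P l| \<le>o r"
proof (rule ccontr)
  assume "\<not> ?thesis"
  hence "|\<Union>l\<in>L. A \<inter> P l| \<le>o r" using small_union[OF r L, of "\<lambda>l. A \<inter> P l"] by blast
  moreover have "A = (\<Union>l\<in>L. A \<inter> P l)" using cov by blast
  ultimately show False using A by simp
qed

lemma small_mono:
  assumes "|B| \<le>o r" "A \<subseteq> B" shows "|A| \<le>o r"
  using assms card_of_mono1 ordLeq_transitive by blast

lemma infinite_of_natLeq:
  assumes "Card_order k" "natLeq <o k" shows "infinite (Field k)"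
proof
  assume "finite (Field k)"
  hence "k <o natLeq" using finite_ordLess_infinite[of k natLeq] assms
      natLeq_Card_order Field_natLeq unfolding card_order_on_def by auto
  thus False using assms not_ordLess_ordLeq ordLess_imp_ordLeq by blast
qed

lemma finite_less_inf:
  assumes "Card_order k" "infinite (Field k)" "finite A" shows "|A| <o k"
proof -
  have "Well_order k" using assms(1) unfolding card_order_on_def by blast
  moreover have "finite (Field (card_of A))" using assms(3) by (simp add: Field_card_of)
  ultimately show ?thesis using finite_ordLess_infinite[of "|A|" k] assms(2) card_of_Well_order by blast
qed



lemma cf_inter2:
  assumes F: "complete_filter k X F" and k: "Card_order k" "infinite (Field k)"
    and AB: "A \<in> F" "B \<in> F"
  shows "A \<inter> B \<in> F"
proof -
  have "|{A,B}| <o k" by (rule finite_less_inf[OF k]) simp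
  moreover have "{A,B} \<subseteq> F" "{A,B} \<noteq> {}" using AB by auto
  ultimately have "\<Inter>{A,B} \<in> F" using F unfolding complete_filter_def by blast
  thus ?thesis by simp
qed

lemma cuf_pigeon:
  assumes U: "complete_ultrafilter k X U" and k: "Card_order k" "infinite (Field k)"
    and A: "A \<in> U" and cov: "A \<subseteq> (\<Union>l\<in>L. P l)" and L: "|L| <o k"
  shows "\<exists>l\<in>L. A \<inter> P l \<in> U"
proof (rule ccontr)
  assume na: "\<not> ?thesis"
  have F: "complete_filter k X U" using U unfolding complete_ultrafilter_def by blast
  have AX: "A \<subseteq> X" using F A unfolding complete_filter_def by auto
  have "A \<noteq> {}" using F A unfolding complete_filter_def by auto
  hence Lne: "L \<noteq> {}" using cov by blast
  have C: "\<forall>l\<in>L. X - (A \<inter> P l) \<in> U"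
  proof
    fix l assume "l \<in> L"
    hence "A \<inter> P l \<notin> U" using na by blast
    moreover have "A \<inter> P l \<subseteq> X" using AX by blast
    ultimately show "X - (A \<inter> P l) \<in> U" using U unfolding complete_ultrafilter_def by blast
  qed
  let ?A = "(\<lambda>l. X - (A \<inter> P l)) ` L"
  have "|?A| <o k" using card_of_image L ordLeq_ordLess_trans by blast
  moreover have "?A \<subseteq> U" "?A \<noteq> {}" using C Lne by auto
  ultimately have "\<Inter>?A \<in> U" using F unfolding complete_filter_def by blast
  hence "A \<inter> \<Inter>?A \<in> U" using cf_inter2[OF F k] A by blast
  moreover have "A \<inter> \<Inter>?A = {}" using cov by blast
  ultimately show False using F unfolding complete_filter_def by auto
qed



lemma cf_sub: "complete_filter k X F \<Longrightarrow> A \<in> F \<Longrightarrow> A \<subseteq> X"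
  unfolding complete_filter_def by blast
lemma cf_X: "complete_filter k X F \<Longrightarrow> X \<in> F"
  unfolding complete_filter_def by blast
lemma cf_empty: "complete_filter k X F \<Longrightarrow> {} \<notin> F"
  unfolding complete_filter_def by blast
lemma cf_up: "complete_filter k X F \<Longrightarrow> A \<in> F \<Longrightarrow> A \<subseteq> B \<Longrightarrow> B \<subseteq> X \<Longrightarrow> B \<in> F"
  unfolding complete_filter_def by blast
lemma cf_Inter: "complete_filter k X F \<Longrightarrow> \<A> \<subseteq> F \<Longrightarrow> \<A> \<noteq> {} \<Longrightarrow> |\<A>| <o k \<Longrightarrow> \<Inter>\<A> \<in> F"
  unfolding complete_filter_def by blast
lemma cuf_cf: "complete_ultrafilter k X U \<Longrightarrow> complete_filter k X U"
  unfolding complete_ultrafilter_def by blast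
lemma cuf_ultra: "complete_ultrafilter k X U \<Longrightarrow> Y \<subseteq> X \<Longrightarrow> Y \<in> U \<or> X - Y \<in> U"
  unfolding complete_ultrafilter_def by blast

lemma exists_uf:
  fixes r :: "'l rel" and k :: "'c rel" and X :: "'k set"
  assumes r: "Card_order r" "infinite (Field r)" and sc: "strongly_compact k TYPE('k set)"
    and kr: "k <o r" and X: "\<not> |X| \<le>o r"
  shows "\<exists>U. complete_ultrafilter k X U \<and> (\<forall>A. A \<subseteq> X \<and> |X - A| \<le>o r \<longrightarrow> A \<in> U)"
proof -
  define s :: "'k \<Rightarrow> 'k set" where "s = (\<lambda>x. {x})"
  have injs: "inj s" unfolding s_def inj_def by blast
  define X' where "X' = s ` X"
  define F' where "F' = {A'. A' \<subseteq> X' \<and> |X' - A'| \<le>o r}"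
  have cf: "complete_filter k X' F'"
    unfolding complete_filter_def
  proof (intro conjI allI impI)
    show "F' \<subseteq> Pow X'" unfolding F'_def by blast
    show "X' \<in> F'" unfolding F'_def using card_of_empty1[of r] r(1) by simp
    show "{} \<notin> F'"
    proof
      assume "{} \<in> F'"
      hence "|X'| \<le>o r" unfolding F'_def by simp
      moreover have "bij_betw s X X'" unfolding X'_def
        using injs by (simp add: bij_betw_imageI inj_on_subset)
      hence "|X| =o |X'|" using card_of_ordIso by blast
      ultimately show False using X ordIso_ordLeq_trans by blast
    qed
    fix A B assume "A \<in> F' \<and> A \<subseteq> B \<and> B \<subseteq> X'"
    hence "|X' - A| \<le>o r" "X' - B \<subseteq> X' - A" "B \<subseteq> X'" unfolding F'_def by auto
    thus "B \<in> F'" unfolding F'_def using small_mono[of "X' - A" r "X' - B"] by simp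
  next
    fix \<A> assume h: "\<A> \<subseteq> F' \<and> \<A> \<noteq> {} \<and> |\<A>| <o k"
    have "|\<A>| <o r" using h kr ordLess_transitive by blast
    hence L: "|\<A>| \<le>o r" by (rule ordLess_imp_ordLeq)
    have P: "\<forall>A\<in>\<A>. |X' - A| \<le>o r" using h unfolding F'_def by blast
    have "|\<Union>A\<in>\<A>. X' - A| \<le>o r" by (rule small_union[OF r L P])
    moreover have "(\<Union>A\<in>\<A>. X' - A) = X' - \<Inter>\<A>" using h by blast
    moreover have "\<Inter>\<A> \<subseteq> X'" using h unfolding F'_def by blast
    ultimately show "\<Inter>\<A> \<in> F'" unfolding F'_def by simp
  qed
  have "\<forall>(X::'k set set) F. complete_filter k X F \<longrightarrow> (\<exists>U. F \<subseteq> U \<and> complete_ultrafilter k X U)"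
    using sc unfolding strongly_compact_def by blast
  then obtain U' where U': "F' \<subseteq> U'" "complete_ultrafilter k X' U'"
    using cf by blast
  have cfU': "complete_filter k X' U'" using cuf_cf[OF U'(2)] .
  define U where "U = {A. A \<subseteq> X \<and> s ` A \<in> U'}"
  have diff: "\<And>Y. Y \<subseteq> X \<Longrightarrow> X' - s ` Y = s ` (X - Y)"
    unfolding X'_def using injs by (simp add: image_set_diff)
  have cfU: "complete_filter k X U"
    unfolding complete_filter_def
  proof (intro conjI allI impI)
    show "U \<subseteq> Pow X" unfolding U_def by blast
    show "X \<in> U" unfolding U_def using cf_X[OF cfU'] unfolding X'_def by blast
    show "{} \<notin> U" unfolding U_def using cf_empty[OF cfU'] by auto
    fix A B assume h: "A \<in> U \<and> A \<subseteq> B \<and> B \<subseteq> X"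
    hence "s ` A \<in> U'" "s ` A \<subseteq> s ` B" "s ` B \<subseteq> X'" unfolding U_def X'_def by auto
    hence "s ` B \<in> U'" using cf_up[OF cfU'] by blast
    thus "B \<in> U" unfolding U_def using h by blast
  next
    fix \<A> assume h: "\<A> \<subseteq> U \<and> \<A> \<noteq> {} \<and> |\<A>| <o k"
    let ?B = "(\<lambda>A. s ` A) ` \<A>"
    have "|?B| <o k" using h card_of_image[of "\<lambda>A. s ` A" \<A>] ordLeq_ordLess_trans by blast
    moreover have "?B \<subseteq> U'" "?B \<noteq> {}" using h unfolding U_def by auto
    ultimately have "\<Inter>?B \<in> U'" using cf_Inter[OF cfU'] by blast
    moreover have "\<Inter>?B = s ` \<Inter>\<A>"
    proof
      show "s ` \<Inter>\<A> \<subseteq> \<Inter>?B" by blast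
      show "\<Inter>?B \<subseteq> s ` \<Inter>\<A>"
      proof
        fix z assume z: "z \<in> \<Inter>?B"
        obtain A0 where A0: "A0 \<in> \<A>" using h by blast
        hence "z \<in> s ` A0" using z by blast
        then obtain x where x: "z = {x}" unfolding s_def by blast
        have "\<forall>A\<in>\<A>. x \<in> A" using z x unfolding s_def by blast
        thus "z \<in> s ` \<Inter>\<A>" using x unfolding s_def by blast
      qed
    qed
    moreover have "\<Inter>\<A> \<subseteq> X" using h unfolding U_def by blast
    ultimately show "\<Inter>\<A> \<in> U" unfolding U_def by simp
  qed
  have ultra: "\<forall>Y. Y \<subseteq> X \<longrightarrow> Y \<in> U \<or> X - Y \<in> U"
  proof (intro allI impI)
    fix Y assume Y: "Y \<subseteq> X"
    hence "s ` Y \<subseteq> X'" unfolding X'_def by blast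
    hence "s ` Y \<in> U' \<or> X' - s ` Y \<in> U'" using cuf_ultra[OF U'(2)] by blast
    thus "Y \<in> U \<or> X - Y \<in> U" unfolding U_def using Y diff[OF Y] by auto
  qed
  have co: "\<forall>A. A \<subseteq> X \<and> |X - A| \<le>o r \<longrightarrow> A \<in> U"
  proof (intro allI impI)
    fix A assume A: "A \<subseteq> X \<and> |X - A| \<le>o r"
    have "|s ` (X - A)| \<le>o r" using A card_of_image[of s "X - A"] ordLeq_transitive by blast
    hence "s ` A \<in> F'" unfolding F'_def using diff[of A] A unfolding X'_def by auto
    thus "A \<in> U" unfolding U_def using A U'(1) by blast
  qed
  have "complete_ultrafilter k X U" using cfU ultra unfolding complete_ultrafilter_def by blast
  thus ?thesis using co by blast
qed



lemma get_kappa: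
  fixes r :: "'l rel" and A :: "'a set"
  assumes r: "Card_order r"
    and lim: "\<forall>\<mu>::'l rel. Card_order \<mu> \<and> \<mu> <o r \<longrightarrow>
           (\<exists>\<kappa>::'l rel. \<mu> <o \<kappa> \<and> \<kappa> <o r \<and> strongly_compact \<kappa> TYPE('k set))"
    and A: "|A| <o r"
  shows "\<exists>\<kappa>::'l rel. |A| <o \<kappa> \<and> \<kappa> <o r \<and> strongly_compact \<kappa> TYPE('k set)"
proof -
  have "|A| \<le>o |Field r|" using le_Field_of_small[OF r ordLess_imp_ordLeq[OF A]] .
  then obtain h where h: "inj_on h A" "h ` A \<subseteq> Field r" using card_of_ordLeq[of A "Field r"] by blast
  have "bij_betw h A (h ` A)" using h(1) by (rule bij_betw_imageI) simp
  hence iso: "|A| =o |h ` A|" using card_of_ordIso by blast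
  have "|h ` A| <o r" using ordIso_ordLess_trans[OF ordIso_symmetric[OF iso] A] .
  moreover have "Card_order |h ` A|" by (rule card_of_Card_order)
  ultimately have "\<exists>\<kappa>::'l rel. |h ` A| <o \<kappa> \<and> \<kappa> <o r \<and> strongly_compact \<kappa> TYPE('k set)"
    using lim by simp
  then obtain \<kappa> :: "'l rel" where k: "|h ` A| <o \<kappa>" "\<kappa> <o r" "strongly_compact \<kappa> TYPE('k set)"
    by blast
  have "|A| <o \<kappa>" using ordIso_ordLess_trans[OF iso k(1)] .
  thus ?thesis using k by blast
qed

lemma get_kappa2:
  fixes r :: "'l rel" and A :: "'a set" and B :: "'b set"
  assumes r: "Card_order r" "infinite (Field r)"
    and lim: "\<forall>\<mu>::'l rel. Card_order \<mu> \<and> \<mu> <o r \<longrightarrow>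
           (\<exists>\<kappa>::'l rel. \<mu> <o \<kappa> \<and> \<kappa> <o r \<and> strongly_compact \<kappa> TYPE('k set))"
    and A: "|A| <o r" and B: "|B| <o r"
  shows "\<exists>\<kappa>::'l rel. |A| <o \<kappa> \<and> |B| <o \<kappa> \<and> \<kappa> <o r \<and> strongly_compact \<kappa> TYPE('k set)"
proof -
  have "|A <+> B| <o r" using card_of_Plus_ordLess_infinite_Field r A B by blast
  then obtain \<kappa> :: "'l rel" where k: "|A <+> B| <o \<kappa>" "\<kappa> <o r" "strongly_compact \<kappa> TYPE('k set)"
    using get_kappa[OF r(1) lim] by blast
  have "|A| <o \<kappa>" using card_of_Plus1[of A B] k(1) ordLeq_ordLess_trans by blast
  moreover have "|B| <o \<kappa>" using card_of_Plus2[of B A] k(1) ordLeq_ordLess_trans by blast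
  ultimately show ?thesis using k by blast
qed

lemma sc_props:
  assumes "strongly_compact k TYPE('u)"
  shows "Card_order k" "infinite (Field k)"
  using assms infinite_of_natLeq unfolding strongly_compact_def by blast+

lemma r_infinite:
  fixes r :: "'l rel"
  assumes r: "Card_order r" and sing: "\<not> regularCard r"
    and lim: "\<forall>\<mu>::'l rel. Card_order \<mu> \<and> \<mu> <o r \<longrightarrow>
           (\<exists>\<kappa>::'l rel. \<mu> <o \<kappa> \<and> \<kappa> <o r \<and> strongly_compact \<kappa> TYPE('k set))"
  shows "infinite (Field r)"
proof (cases "|{}::'l set| <o r")
  case True
  then obtain \<kappa> :: "'l rel" where k: "\<kappa> <o r" "strongly_compact \<kappa> TYPE('k set)"
    using lim card_of_Card_order by blast
  have "natLeq <o \<kappa>" using k(2) unfolding strongly_compact_def by blast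
  hence "natLeq <o r" using k(1) ordLess_transitive by blast
  thus ?thesis using infinite_of_natLeq r by blast
next
  case False
  have wr: "Well_order r" using r unfolding card_order_on_def by blast
  have le: "r \<le>o |{}::'l set|" using False not_ordLess_iff_ordLeq[OF wr card_of_Well_order] by blast
  have "|Field r| \<le>o |{}::'l set|" using le card_of_Field_ordIso[OF r] ordIso_ordLeq_trans by blast
  hence Fe: "Field r = {}" using card_of_empty3 by blast
  have "regularCard r" unfolding regularCard_def
  proof (intro allI impI)
    fix K assume "K \<subseteq> Field r \<and> cofinal K r"
    hence "K = {}" using Fe by blast
    thus "|K| =o r" using le card_of_empty1[of r] r ordIso_iff_ordLeq by blast
  qed
  thus ?thesis using sing by blast
qed

lemma lt_cardSuc_small:
  assumes r: "Card_order r" and X: "|X| <o cardSuc r" shows "|X| \<le>o r"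
proof (rule ccontr)
  assume "\<not> |X| \<le>o r"
  hence "r <o |X|" using not_ordLeq_iff_ordLess[OF _ card_of_Well_order] r
    unfolding card_order_on_def by blast
  hence "cardSuc r \<le>o |X|" using cardSuc_least[OF r card_of_Card_order] by blast
  thus False using X not_ordLess_ordLeq by blast
qed

lemma large_iso:
  fixes r :: "'l rel" and K :: "'k rel" and B :: "'b set"
  assumes r: "Card_order r" and K: "Card_order K" "K =o cardSuc r"
    and B: "\<not> |B| \<le>o r" and BK: "|B| \<le>o |Field K|"
  shows "|B| =o K"
proof -
  have "r <o |B|" using B not_ordLeq_iff_ordLess[OF _ card_of_Well_order] r
    unfolding card_order_on_def by blast
  hence "cardSuc r \<le>o |B|" using cardSuc_least[OF r card_of_Card_order] by blast
  hence "K \<le>o |B|" using K(2) ordIso_ordLeq_trans by blast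
  moreover have "|B| \<le>o K" using BK card_of_Field_ordIso[OF K(1)] ordLeq_ordIso_trans by blast
  ultimately show ?thesis using ordIso_iff_ordLeq by blast
qed

lemma K_total:
  assumes K: "Card_order K" and a: "a \<in> Field K" and b: "b \<in> Field K" and ne: "a \<noteq> b"
  shows "ord_less K a b \<or> ord_less K b a"
proof -
  have "Well_order K" using K unfolding card_order_on_def by blast
  hence "total_on (Field K) K" unfolding well_order_on_def linear_order_on_def by blast
  thus ?thesis using a b ne unfolding total_on_def ord_less_def by blast
qed

lemma K_asym:
  assumes K: "Card_order K" and "ord_less K a b" shows "\<not> ord_less K b a"
proof -
  have "Well_order K" using K unfolding card_order_on_def by blast
  hence "antisym K" unfolding well_order_on_def linear_order_on_def partial_order_on_def by blast
  thus ?thesis using assms(2) unfolding antisym_def ord_less_def by blast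
qed

lemma K_init_small:
  fixes r :: "'l rel" and K :: "'k rel"
  assumes r: "Card_order r" "infinite (Field r)" and K: "Card_order K" "K =o cardSuc r"
    and b: "\<beta> \<in> Field K"
  shows "|{\<gamma>\<in>Field K. \<not> ord_less K \<beta> \<gamma>}| \<le>o r"
proof -
  have "|underS K \<beta>| <o K" using card_of_underS[OF K(1) b] .
  hence "|underS K \<beta>| <o cardSuc r" using K(2) ordLess_ordIso_trans by blast
  hence s1: "|underS K \<beta>| \<le>o r" using lt_cardSuc_small[OF r(1)] by blast
  have s2: "|{\<beta>}| \<le>o r"
    using finite_less_inf[OF r, of "{\<beta>}"] ordLess_imp_ordLeq by blast
  have "|underS K \<beta> \<union> {\<beta>}| \<le>o r" using card_of_Un_ordLeq_infinite_Field[OF r(2) s1 s2 r(1)] .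
  moreover have "{\<gamma>\<in>Field K. \<not> ord_less K \<beta> \<gamma>} \<subseteq> underS K \<beta> \<union> {\<beta>}"
  proof
    fix \<gamma> assume g: "\<gamma> \<in> {\<gamma>\<in>Field K. \<not> ord_less K \<beta> \<gamma>}"
    show "\<gamma> \<in> underS K \<beta> \<union> {\<beta>}"
    proof (cases "\<gamma> = \<beta>")
      case False
      hence "ord_less K \<gamma> \<beta>" using K_total[OF K(1) _ b, of \<gamma>] g by blast
      thus ?thesis unfolding underS_def ord_less_def by blast
    qed simp
  qed
  ultimately show ?thesis using small_mono by blast
qed

lemma D_large:
  fixes r :: "'l rel" and K :: "'k rel"
  assumes r: "Card_order r" "infinite (Field r)" and K: "Card_order K" "K =o cardSuc r"
    and DK: "D \<subseteq> Field K" and unb: "\<forall>\<alpha>\<in>Field K. \<exists>\<beta>\<in>D. ord_less K \<alpha> \<beta>"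
  shows "\<not> |D| \<le>o r"
proof
  assume Ds: "|D| \<le>o r"
  have "\<forall>\<delta>\<in>D. |{\<gamma>\<in>Field K. \<not> ord_less K \<delta> \<gamma>}| \<le>o r"
    using K_init_small[OF r K] DK by blast
  hence "|\<Union>\<delta>\<in>D. {\<gamma>\<in>Field K. \<not> ord_less K \<delta> \<gamma>}| \<le>o r" by (rule small_union[OF r Ds])
  moreover have "Field K \<subseteq> (\<Union>\<delta>\<in>D. {\<gamma>\<in>Field K. \<not> ord_less K \<delta> \<gamma>})"
    using unb K_asym[OF K(1)] by blast
  ultimately have "|Field K| \<le>o r" using small_mono by blast
  hence "K \<le>o r" using card_of_Field_ordIso[OF K(1)] ordIso_ordLeq_trans ordIso_symmetric by blast
  hence "cardSuc r \<le>o r" using K(2) ordIso_ordLeq_trans ordIso_symmetric by blast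
  thus False using cardSuc_greater[OF r(1)] not_ordLess_ordLeq by blast
qed



theorem mainTheorem4:
  fixes r :: "'l rel" and K :: "'k rel" and W :: "'w set" and D :: "'k set"
    and T :: "'k \<Rightarrow> 'w set" and I :: "'i set"
    and R :: "'i \<Rightarrow> (('w \<times> 'k) \<times> ('w \<times> 'k)) set"
  assumes lam_card: "Card_order r"
    and lam_singular: "\<not> regularCard r"
    and lam_limit_sc: "\<forall>\<mu>::'l rel. Card_order \<mu> \<and> ordLess2 \<mu> r \<longrightarrow>
           (\<exists>\<kappa>::'l rel. ordLess2 \<mu> \<kappa> \<and> ordLess2 \<kappa> r \<and> strongly_compact \<kappa> TYPE('k set))"
    and succ_card: "Card_order K"
    and succ_is_succ: "ordIso2 K (cardSuc r)"
    and sys: "strong_lam_system r K W D T I R"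
    and small_index: "ordLess2 (card_of I) r"
  shows "\<exists>B. is_branch D T I R B \<and> ordIso2 (card_of B) K"
proof -
  note r = lam_card r_infinite[OF lam_card lam_singular lam_limit_sc]
  note KK = succ_card succ_is_succ
  have Wr: "|W| \<le>o r" and DK: "D \<subseteq> Field K" and unb: "\<forall>\<alpha>\<in>Field K. \<exists>\<beta>\<in>D. ord_less K \<alpha> \<beta>"
    and TW: "\<forall>\<alpha>\<in>D. T \<alpha> \<subseteq> W"
    and c1: "\<forall>\<alpha>\<in>D. \<forall>\<beta>\<in>D. ord_less K \<alpha> \<beta> \<longrightarrow>
        (\<exists>a\<in>T \<alpha>. \<exists>b\<in>T \<beta>. \<exists>i\<in>I. ((a, \<alpha>), (b, \<beta>)) \<in> R i)"
    and c2: "\<forall>i\<in>I. \<forall>\<alpha>\<in>D. \<forall>\<beta>\<in>D. \<forall>\<gamma>\<in>D. ord_less K \<alpha> \<beta> \<and> ord_less K \<beta> \<gamma> \<longrightarrow>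
        (\<forall>a\<in>T \<alpha>. \<forall>b\<in>T \<beta>. \<forall>c\<in>T \<gamma>.
           ((a, \<alpha>), (c, \<gamma>)) \<in> R i \<and> ((b, \<beta>), (c, \<gamma>)) \<in> R i \<longrightarrow>
           ((a, \<alpha>), (b, \<beta>)) \<in> R i)"
    and strong: "\<forall>\<alpha>\<in>D. \<forall>\<beta>\<in>D. ord_less K \<alpha> \<beta> \<longrightarrow>
        (\<forall>b\<in>T \<beta>. \<exists>a\<in>T \<alpha>. \<exists>i\<in>I. ((a, \<alpha>), (b, \<beta>)) \<in> R i)"
    using sys unfolding strong_lam_system_def lam_system_def by blast+
  have c2': "((a, \<alpha>), (b, \<beta>)) \<in> R i"
    if "i \<in> I" "\<alpha> \<in> D" "\<beta> \<in> D" "\<gamma> \<in> D" "ord_less K \<alpha> \<beta>" "ord_less K \<beta> \<gamma>"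
      "a \<in> T \<alpha>" "b \<in> T \<beta>" "c \<in> T \<gamma>" "((a, \<alpha>), (c, \<gamma>)) \<in> R i" "((b, \<beta>), (c, \<gamma>)) \<in> R i"
    for i \<alpha> \<beta> \<gamma> a b c
    using c2 that by blast
  obtain C where C: "C \<subseteq> Field r" "cofinal C r" "\<not> |C| =o r"
    using lam_singular unfolding regularCard_def by blast
  have "|C| \<le>o r" using small_of_le[OF r(1) card_of_mono1[OF C(1)]] .
  hence Cs: "|C| <o r" using C(3) ordLeq_iff_ordLess_or_ordIso[of "|C|" r] by blast
  have "|W| \<le>o |Field r|" using le_Field_of_small[OF r(1) Wr] .
  then obtain g where g: "inj_on g W" "g ` W \<subseteq> Field r" using card_of_ordLeq[of W "Field r"] by blast
  define Wc where "Wc c = {w\<in>W. g w \<in> underS r c}" for c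
  have Wc_small: "|Wc c| <o r" if c: "c \<in> C" for c
  proof -
    have "inj_on g (Wc c)" "g ` (Wc c) \<subseteq> underS r c" using g(1) unfolding Wc_def inj_on_def by auto
    hence "|Wc c| \<le>o |underS r c|" using card_of_ordLeq[of "Wc c" "underS r c"] by blast
    moreover have "|underS r c| <o r" using card_of_underS[OF r(1)] c C(1) by blast
    ultimately show ?thesis by (rule ordLeq_ordLess_trans)
  qed
  have Wcov: "W \<subseteq> (\<Union>c\<in>C. Wc c)"
  proof
    fix w assume w: "w \<in> W"
    hence "g w \<in> Field r" using g(2) by blast
    then obtain c where "c \<in> C" "g w \<noteq> c" "(g w, c) \<in> r" using C(2) unfolding cofinal_def by blast
    thus "w \<in> (\<Union>c\<in>C. Wc c)" using w unfolding Wc_def underS_def by blast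
  qed
  obtain k1 :: "'l rel" where k1: "|C| <o k1" "|I| <o k1" "k1 <o r" "strongly_compact k1 TYPE('k set)"
    using get_kappa2[OF r lam_limit_sc Cs small_index] by blast
  note k1p = sc_props[OF k1(4)]
  have Dl: "\<not> |D| \<le>o r" using D_large[OF r KK DK unb] .
  obtain U1 where U1: "complete_ultrafilter k1 D U1" and U1co: "\<forall>A. A \<subseteq> D \<and> |D - A| \<le>o r \<longrightarrow> A \<in> U1"
    using exists_uf[OF r k1(4) k1(3) Dl] by (elim exE conjE) blast
  have cfU1: "complete_filter k1 D U1" using cuf_cf[OF U1] .
  have Tne: "T \<beta> \<noteq> {}" if b: "\<beta> \<in> D" for \<beta>
  proof -
    obtain \<gamma> where g: "\<gamma> \<in> D" "ord_less K \<beta> \<gamma>" using unb b DK by blast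
    show ?thesis using c1[rule_format, OF b g(1) g(2)] by blast
  qed
  define bb where "bb \<beta> = (SOME x. x \<in> T \<beta>)" for \<beta>
  have hb: "bb \<beta> \<in> T \<beta>" if "\<beta> \<in> D" for \<beta>
    unfolding bb_def by (rule someI_ex) (use Tne[OF that] in blast)
  define G where "G \<alpha> = {\<beta>\<in>D. ord_less K \<alpha> \<beta>}" for \<alpha>
  have G_in: "G \<alpha> \<in> U1" if a: "\<alpha> \<in> D" for \<alpha>
  proof -
    have "D - G \<alpha> \<subseteq> {\<gamma>\<in>Field K. \<not> ord_less K \<alpha> \<gamma>}" unfolding G_def using DK by blast
    moreover have "|{\<gamma>\<in>Field K. \<not> ord_less K \<alpha> \<gamma>}| \<le>o r"
      by (rule K_init_small[OF r KK]) (use a DK in blast)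
    ultimately have "|D - G \<alpha>| \<le>o r" using small_mono by blast
    moreover have "G \<alpha> \<subseteq> D" unfolding G_def by blast
    ultimately show ?thesis using U1co by blast
  qed
  define P1 where "P1 \<alpha> c i = {\<beta>\<in>D. \<exists>a\<in>T \<alpha> \<inter> Wc c. ((a, \<alpha>), (bb \<beta>, \<beta>)) \<in> R i}" for \<alpha> c i
  have step1: "\<exists>c\<in>C. \<exists>i\<in>I. G \<alpha> \<inter> P1 \<alpha> c i \<in> U1" if a: "\<alpha> \<in> D" for \<alpha>
  proof -
    have cov: "G \<alpha> \<subseteq> (\<Union>c\<in>C. (\<Union>i\<in>I. P1 \<alpha> c i))"
    proof
      fix \<beta> assume b: "\<beta> \<in> G \<alpha>"
      hence bD: "\<beta> \<in> D" "ord_less K \<alpha> \<beta>" unfolding G_def by auto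
      then obtain x i where xi: "x \<in> T \<alpha>" "i \<in> I" "((x, \<alpha>), (bb \<beta>, \<beta>)) \<in> R i"
        using strong[rule_format, OF a bD(1) bD(2) hb[OF bD(1)]] by blast
      have "x \<in> W" using TW a xi(1) by blast
      then obtain c where "c \<in> C" "x \<in> Wc c" using Wcov by blast
      thus "\<beta> \<in> (\<Union>c\<in>C. (\<Union>i\<in>I. P1 \<alpha> c i))" using xi bD unfolding P1_def by blast
    qed
    obtain c where c: "c \<in> C" "G \<alpha> \<inter> (\<Union>i\<in>I. P1 \<alpha> c i) \<in> U1"
      using cuf_pigeon[OF U1 k1p G_in[OF a] cov k1(1)] by blast
    obtain i where i: "i \<in> I" "(G \<alpha> \<inter> (\<Union>i\<in>I. P1 \<alpha> c i)) \<inter> P1 \<alpha> c i \<in> U1"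
      using cuf_pigeon[OF U1 k1p c(2) _ k1(2), of "P1 \<alpha> c"] by blast
    have "G \<alpha> \<inter> P1 \<alpha> c i \<in> U1"
      by (rule cf_up[OF cfU1 i(2)]) (auto simp: G_def)
    thus ?thesis using c(1) i(1) by blast
  qed
  have "\<forall>\<alpha>\<in>D. \<exists>p. fst p \<in> C \<and> snd p \<in> I \<and> G \<alpha> \<inter> P1 \<alpha> (fst p) (snd p) \<in> U1"
  proof
    fix \<alpha> assume "\<alpha> \<in> D"
    then obtain c i where "c \<in> C" "i \<in> I" "G \<alpha> \<inter> P1 \<alpha> c i \<in> U1" using step1 by blast
    thus "\<exists>p. fst p \<in> C \<and> snd p \<in> I \<and> G \<alpha> \<inter> P1 \<alpha> (fst p) (snd p) \<in> U1"
      by (intro exI[of _ "(c, i)"]) simp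
  qed
  then obtain p where p: "\<forall>\<alpha>\<in>D. fst (p \<alpha>) \<in> C \<and> snd (p \<alpha>) \<in> I \<and> G \<alpha> \<inter> P1 \<alpha> (fst (p \<alpha>)) (snd (p \<alpha>)) \<in> U1"
    by (rule bchoice[THEN exE]) blast
  define cc where "cc \<alpha> = fst (p \<alpha>)" for \<alpha>
  define ii where "ii \<alpha> = snd (p \<alpha>)" for \<alpha>
  have ch1: "\<forall>\<alpha>\<in>D. cc \<alpha> \<in> C \<and> ii \<alpha> \<in> I \<and> G \<alpha> \<inter> P1 \<alpha> (cc \<alpha>) (ii \<alpha>) \<in> U1"
    using p unfolding cc_def ii_def by blast
  have cov1: "D \<subseteq> (\<Union>c\<in>C. {\<alpha>. cc \<alpha> = c})" using ch1 by blast
  obtain cs where cs: "cs \<in> C" "\<not> |D \<inter> {\<alpha>. cc \<alpha> = cs}| \<le>o r"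
    using large_pigeon[OF r Dl cov1 ordLess_imp_ordLeq[OF Cs]] by blast
  have cov2: "D \<inter> {\<alpha>. cc \<alpha> = cs} \<subseteq> (\<Union>i\<in>I. {\<alpha>. ii \<alpha> = i})" using ch1 by blast
  obtain ist where ist: "ist \<in> I" "\<not> |(D \<inter> {\<alpha>. cc \<alpha> = cs}) \<inter> {\<alpha>. ii \<alpha> = ist}| \<le>o r"
    using large_pigeon[OF r cs(2) cov2 ordLess_imp_ordLeq[OF small_index]] by blast
  define D1 where "D1 = (D \<inter> {\<alpha>. cc \<alpha> = cs}) \<inter> {\<alpha>. ii \<alpha> = ist}"
  have D1l: "\<not> |D1| \<le>o r" using ist(2) unfolding D1_def .
  have D1D: "D1 \<subseteq> D" unfolding D1_def by blast
  define Ws where "Ws = Wc cs"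
  have D1P: "G \<alpha> \<inter> P1 \<alpha> cs ist \<in> U1" if "\<alpha> \<in> D1" for \<alpha>
    using ch1 that unfolding D1_def by auto
  have coh1: "\<exists>a\<in>T \<alpha> \<inter> Ws. \<exists>a'\<in>T \<alpha>' \<inter> Ws. ((a, \<alpha>), (a', \<alpha>')) \<in> R ist"
    if a: "\<alpha> \<in> D1" "\<alpha>' \<in> D1" "ord_less K \<alpha> \<alpha>'" for \<alpha> \<alpha>'
  proof -
    have "(G \<alpha> \<inter> P1 \<alpha> cs ist) \<inter> (G \<alpha>' \<inter> P1 \<alpha>' cs ist) \<in> U1"
      using cf_inter2[OF cfU1 k1p D1P[OF a(1)] D1P[OF a(2)]] .
    hence "(G \<alpha> \<inter> P1 \<alpha> cs ist) \<inter> (G \<alpha>' \<inter> P1 \<alpha>' cs ist) \<noteq> {}" using cf_empty[OF cfU1] by auto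
    then obtain \<beta> where b: "\<beta> \<in> D" "ord_less K \<alpha>' \<beta>"
      "\<exists>x\<in>T \<alpha> \<inter> Ws. ((x, \<alpha>), (bb \<beta>, \<beta>)) \<in> R ist"
      "\<exists>x\<in>T \<alpha>' \<inter> Ws. ((x, \<alpha>'), (bb \<beta>, \<beta>)) \<in> R ist"
      unfolding G_def P1_def Ws_def by blast
    then obtain x x' where x: "x \<in> T \<alpha> \<inter> Ws" "((x, \<alpha>), (bb \<beta>, \<beta>)) \<in> R ist"
      "x' \<in> T \<alpha>' \<inter> Ws" "((x', \<alpha>'), (bb \<beta>, \<beta>)) \<in> R ist" by blast
    have aD: "\<alpha> \<in> D" "\<alpha>' \<in> D" using a D1D by blast+
    have "((x, \<alpha>), (x', \<alpha>')) \<in> R ist"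
      by (rule c2'[OF ist(1) aD b(1) a(3) b(2) _ _ hb[OF b(1)] x(2) x(4)]) (use x in blast)+
    thus ?thesis using x by blast
  qed
  have Wss: "|Ws| <o r" unfolding Ws_def using Wc_small[OF cs(1)] .
  obtain k2 :: "'l rel" where k2: "|Ws| <o k2" "k2 <o r" "strongly_compact k2 TYPE('k set)"
    using get_kappa2[OF r lam_limit_sc Wss Wss] by blast
  note k2p = sc_props[OF k2(3)]
  obtain U2 where U2: "complete_ultrafilter k2 D1 U2" and U2co: "\<forall>A. A \<subseteq> D1 \<and> |D1 - A| \<le>o r \<longrightarrow> A \<in> U2"
    using exists_uf[OF r k2(3) k2(2) D1l] by (elim exE conjE) blast
  have cfU2: "complete_filter k2 D1 U2" using cuf_cf[OF U2] .
  define G2 where "G2 \<alpha> = {\<beta>\<in>D1. ord_less K \<alpha> \<beta>}" for \<alpha>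
  have G2_in: "G2 \<alpha> \<in> U2" if a: "\<alpha> \<in> D1" for \<alpha>
  proof -
    have "D1 - G2 \<alpha> \<subseteq> {\<gamma>\<in>Field K. \<not> ord_less K \<alpha> \<gamma>}" unfolding G2_def using DK D1D by blast
    moreover have "|{\<gamma>\<in>Field K. \<not> ord_less K \<alpha> \<gamma>}| \<le>o r"
      by (rule K_init_small[OF r KK]) (use a DK D1D in blast)
    ultimately have "|D1 - G2 \<alpha>| \<le>o r" using small_mono by blast
    moreover have "G2 \<alpha> \<subseteq> D1" unfolding G2_def by blast
    ultimately show ?thesis using U2co by blast
  qed
  define P2 where "P2 \<alpha> a e = {\<beta>\<in>D1. a \<in> T \<alpha> \<and> e \<in> T \<beta> \<and> ((a, \<alpha>), (e, \<beta>)) \<in> R ist}" for \<alpha> a e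
  have step2: "\<exists>a\<in>Ws. \<exists>e\<in>Ws. G2 \<alpha> \<inter> P2 \<alpha> a e \<in> U2" if a: "\<alpha> \<in> D1" for \<alpha>
  proof -
    have cov: "G2 \<alpha> \<subseteq> (\<Union>x\<in>Ws. (\<Union>e\<in>Ws. P2 \<alpha> x e))"
    proof
      fix \<beta> assume b: "\<beta> \<in> G2 \<alpha>"
      hence bD: "\<beta> \<in> D1" "ord_less K \<alpha> \<beta>" unfolding G2_def by auto
      obtain x x' where "x \<in> T \<alpha> \<inter> Ws" "x' \<in> T \<beta> \<inter> Ws" "((x, \<alpha>), (x', \<beta>)) \<in> R ist"
        using coh1[OF a bD(1) bD(2)] by blast
      thus "\<beta> \<in> (\<Union>x\<in>Ws. (\<Union>e\<in>Ws. P2 \<alpha> x e))" using bD unfolding P2_def by blast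
    qed
    obtain x where x: "x \<in> Ws" "G2 \<alpha> \<inter> (\<Union>e\<in>Ws. P2 \<alpha> x e) \<in> U2"
      using cuf_pigeon[OF U2 k2p G2_in[OF a] cov k2(1)] by blast
    obtain e where e: "e \<in> Ws" "(G2 \<alpha> \<inter> (\<Union>e\<in>Ws. P2 \<alpha> x e)) \<inter> P2 \<alpha> x e \<in> U2"
      using cuf_pigeon[OF U2 k2p x(2) _ k2(1), of "P2 \<alpha> x"] by blast
    have "G2 \<alpha> \<inter> P2 \<alpha> x e \<in> U2"
      by (rule cf_up[OF cfU2 e(2)]) (auto simp: G2_def)
    thus ?thesis using x(1) e(1) by blast
  qed
  have "\<forall>\<alpha>\<in>D1. \<exists>p. fst p \<in> Ws \<and> snd p \<in> Ws \<and> G2 \<alpha> \<inter> P2 \<alpha> (fst p) (snd p) \<in> U2"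
  proof
    fix \<alpha> assume "\<alpha> \<in> D1"
    then obtain x e where "x \<in> Ws" "e \<in> Ws" "G2 \<alpha> \<inter> P2 \<alpha> x e \<in> U2" using step2 by blast
    thus "\<exists>p. fst p \<in> Ws \<and> snd p \<in> Ws \<and> G2 \<alpha> \<inter> P2 \<alpha> (fst p) (snd p) \<in> U2"
      by (intro exI[of _ "(x, e)"]) simp
  qed
  then obtain q where q: "\<forall>\<alpha>\<in>D1. fst (q \<alpha>) \<in> Ws \<and> snd (q \<alpha>) \<in> Ws \<and> G2 \<alpha> \<inter> P2 \<alpha> (fst (q \<alpha>)) (snd (q \<alpha>)) \<in> U2"
    by (rule bchoice[THEN exE]) blast
  define aa where "aa \<alpha> = fst (q \<alpha>)" for \<alpha>
  define ee where "ee \<alpha> = snd (q \<alpha>)" for \<alpha>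
  have ch2: "\<forall>\<alpha>\<in>D1. aa \<alpha> \<in> Ws \<and> ee \<alpha> \<in> Ws \<and> G2 \<alpha> \<inter> P2 \<alpha> (aa \<alpha>) (ee \<alpha>) \<in> U2"
    using q unfolding aa_def ee_def by blast
  have cov3: "D1 \<subseteq> (\<Union>e\<in>Ws. {\<alpha>. ee \<alpha> = e})" using ch2 by blast
  obtain es where es: "es \<in> Ws" "\<not> |D1 \<inter> {\<alpha>. ee \<alpha> = es}| \<le>o r"
    using large_pigeon[OF r D1l cov3 ordLess_imp_ordLeq[OF Wss]] by blast
  define D2 where "D2 = D1 \<inter> {\<alpha>. ee \<alpha> = es}"
  have D2l: "\<not> |D2| \<le>o r" using es(2) unfolding D2_def .
  have D2P: "G2 \<alpha> \<inter> P2 \<alpha> (aa \<alpha>) es \<in> U2" "\<alpha> \<in> D1" if "\<alpha> \<in> D2" for \<alpha>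
    using ch2 that unfolding D2_def by auto
  have aaT: "aa \<alpha> \<in> T \<alpha>" if "\<alpha> \<in> D2" for \<alpha>
  proof -
    have "G2 \<alpha> \<inter> P2 \<alpha> (aa \<alpha>) es \<noteq> {}" using D2P[OF that] cf_empty[OF cfU2] by auto
    thus ?thesis unfolding P2_def by blast
  qed
  have rel: "((aa \<alpha>, \<alpha>), (aa \<alpha>', \<alpha>')) \<in> R ist"
    if a: "\<alpha> \<in> D2" "\<alpha>' \<in> D2" "ord_less K \<alpha> \<alpha>'" for \<alpha> \<alpha>'
  proof -
    have "(G2 \<alpha> \<inter> P2 \<alpha> (aa \<alpha>) es) \<inter> (G2 \<alpha>' \<inter> P2 \<alpha>' (aa \<alpha>') es) \<in> U2"
      using cf_inter2[OF cfU2 k2p D2P(1)[OF a(1)] D2P(1)[OF a(2)]] .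
    hence "(G2 \<alpha> \<inter> P2 \<alpha> (aa \<alpha>) es) \<inter> (G2 \<alpha>' \<inter> P2 \<alpha>' (aa \<alpha>') es) \<noteq> {}"
      using cf_empty[OF cfU2] by auto
    then obtain \<beta> where b: "\<beta> \<in> D1" "ord_less K \<alpha>' \<beta>" "es \<in> T \<beta>"
      "((aa \<alpha>, \<alpha>), (es, \<beta>)) \<in> R ist" "((aa \<alpha>', \<alpha>'), (es, \<beta>)) \<in> R ist"
      unfolding G2_def P2_def by blast
    have aD: "\<alpha> \<in> D" "\<alpha>' \<in> D" "\<beta> \<in> D" using a b(1) D1D D2P(2) by blast+
    show ?thesis
      by (rule c2'[OF ist(1) aD a(3) b(2) aaT[OF a(1)] aaT[OF a(2)] b(3) b(4) b(5)])
  qed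
  define B where "B = (\<lambda>\<alpha>. (aa \<alpha>, \<alpha>)) ` D2"
  have D2D: "D2 \<subseteq> D" using D1D unfolding D2_def by blast
  have "B \<subseteq> nodes D T"
  proof
    fix x assume "x \<in> B"
    then obtain \<alpha> where "\<alpha> \<in> D2" "x = (aa \<alpha>, \<alpha>)" unfolding B_def by blast
    thus "x \<in> nodes D T" unfolding nodes_def using aaT D2D by auto
  qed
  moreover have "\<forall>x\<in>B. \<forall>y\<in>B. x \<noteq> y \<longrightarrow> (x, y) \<in> R ist \<or> (y, x) \<in> R ist"
  proof (intro ballI impI)
    fix x y assume xy: "x \<in> B" "y \<in> B" "x \<noteq> y"
    obtain \<alpha> where a1: "\<alpha> \<in> D2" "x = (aa \<alpha>, \<alpha>)" using xy(1) unfolding B_def by blast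
    obtain \<alpha>' where a2: "\<alpha>' \<in> D2" "y = (aa \<alpha>', \<alpha>')" using xy(2) unfolding B_def by blast
    note a = a1(1) a2(1) a1(2) a2(2)
    have "\<alpha> \<noteq> \<alpha>'" using a xy(3) by auto
    moreover have "\<alpha> \<in> Field K" "\<alpha>' \<in> Field K" using a(1,2) D2D DK by blast+
    ultimately have "ord_less K \<alpha> \<alpha>' \<or> ord_less K \<alpha>' \<alpha>" using K_total[OF succ_card] by blast
    thus "(x, y) \<in> R ist \<or> (y, x) \<in> R ist"
    proof
      assume "ord_less K \<alpha> \<alpha>'"
      hence "(x, y) \<in> R ist" using rel[OF a(1) a(2)] a(3,4) by simp
      thus ?thesis ..
    next
      assume "ord_less K \<alpha>' \<alpha>"
      hence "(y, x) \<in> R ist" using rel[OF a(2) a(1)] a(3,4) by simp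
      thus ?thesis ..
    qed
  qed
  ultimately have br: "is_branch D T I R B" unfolding is_branch_def using ist(1) by (intro conjI bexI)
  have inj: "inj_on (\<lambda>\<alpha>. (aa \<alpha>, \<alpha>)) D2" unfolding inj_on_def by simp
  hence "bij_betw (\<lambda>\<alpha>. (aa \<alpha>, \<alpha>)) D2 B" unfolding B_def by (rule bij_betw_imageI) simp
  hence isoB: "|D2| =o |B|" using card_of_ordIso by blast
  have Bl: "\<not> |B| \<le>o r"
  proof
    assume "|B| \<le>o r"
    hence "|D2| \<le>o r" by (rule ordIso_ordLeq_trans[OF isoB])
    thus False using D2l by simp
  qed
  have "|B| \<le>o |D2|" unfolding B_def by (rule card_of_image)
  moreover have "|D2| \<le>o |Field K|" using D2D DK by (intro card_of_mono1) blast
  ultimately have "|B| \<le>o |Field K|" by (rule ordLeq_transitive)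
  hence "|B| =o K" by (rule large_iso[OF r(1) KK Bl])
  thus ?thesis using br by blast
qed
end
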